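(* Let $N\ge1$, $1<p,q<\infty$, $\alpha,\beta>0$ with $\frac{\alpha}{p}+\frac{\beta}{q}=1$. For $t>0$ let $Q_t=(0,t)^N$ be the cube of side length $t$, and let $\lambda_1^t(p,q)$ be the first Dirichlet eigenvalue of the system $$-\Delta_p u=\lambda\alpha|u|^{\alpha-2}u|v|^\beta,\qquad -\Delta_q v=\lambda\beta|u|^\alpha|v|^{\beta-2}v\quad\text{in }Q_t,\qquad u=v=0\text{ on }\partial Q_t.$$ Then $t^{\alpha+\beta}\lambda_1^t(p,q)=\lambda_1^1(p,q)$ for every $t>0$.
   Context: $\Delta_r u=\operatorname{div}(|\nabla u|^{r-2}\nabla u)$. $\lambda_1^t(p,q)$ is the infimum over $(u,v)\in W^{1,p}_0(Q_t)\times W^{1,q}_0(Q_t)$ with $\int_{Q_t}|u|^\alpha|v|^\beta>0$ of $\big(\frac1p\int_{Q_t}|\nabla u|^p+\frac1q\int_{Q_t}|\nabla v|^q\big)/\int_{Q_t}|u|^\alpha|v|^\beta$. *)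

theory Defs
  imports "HOL-Analysis.Analysis"
begin

text \<open>C^k functions on the whole space: continuous, and for k+1 differentiable with all
 partial derivatives of class C^k.\<close>
fun Ck :: "nat \<Rightarrow> ('a::euclidean_space \<Rightarrow> real) \<Rightarrow> bool" where
  "Ck 0 f = continuous_on UNIV f"
| "Ck (Suc k) f = (f differentiable_on UNIV \<and>
      (\<forall>i\<in>Basis. Ck k (\<lambda>x. frechet_derivative f (at x) i)))"

definition Cinf :: "('a::euclidean_space \<Rightarrow> real) \<Rightarrow> bool" where
  "Cinf f \<longleftrightarrow> (\<forall>k. Ck k f)"

text \<open>Test functions C_c^infinity(Omega): smooth with compact support contained in Omega.\<close>
definition test_fun :: "'a::euclidean_space set \<Rightarrow> ('a \<Rightarrow> real) \<Rightarrow> bool" where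
  "test_fun \<Omega> \<phi> \<longleftrightarrow> Cinf \<phi> \<and> compact (closure {x. \<phi> x \<noteq> 0})
      \<and> closure {x. \<phi> x \<noteq> 0} \<subseteq> \<Omega>"

text \<open>Classical gradient.\<close>
definition grad :: "('a::euclidean_space \<Rightarrow> real) \<Rightarrow> 'a \<Rightarrow> 'a" where
  "grad \<phi> x = (\<Sum>i\<in>Basis. frechet_derivative \<phi> (at x) i *\<^sub>R i)"

text \<open>g is a weak gradient of u on Omega.\<close>
definition weak_grad :: "'a::euclidean_space set \<Rightarrow> ('a \<Rightarrow> real) \<Rightarrow> ('a \<Rightarrow> 'a) \<Rightarrow> bool" where
  "weak_grad \<Omega> u g \<longleftrightarrow> (\<forall>\<phi>. test_fun \<Omega> \<phi> \<longrightarrow> (\<forall>i\<in>Basis.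
      set_integrable lebesgue \<Omega> (\<lambda>x. u x * frechet_derivative \<phi> (at x) i) \<and>
      set_integrable lebesgue \<Omega> (\<lambda>x. (g x \<bullet> i) * \<phi> x) \<and>
      (LINT x:\<Omega>|lebesgue. u x * frechet_derivative \<phi> (at x) i)
        = - (LINT x:\<Omega>|lebesgue. (g x \<bullet> i) * \<phi> x)))"

text \<open>u in L^p(Omega) (real-valued) and vector fields in L^p(Omega).\<close>
definition Lp :: "'a::euclidean_space set \<Rightarrow> real \<Rightarrow> ('a \<Rightarrow> 'b::euclidean_space) \<Rightarrow> bool" where
  "Lp \<Omega> p f \<longleftrightarrow> set_borel_measurable lebesgue \<Omega> f \<and>
      set_integrable lebesgue \<Omega> (\<lambda>x. norm (f x) powr p)"

text \<open>(u,g) in W^{1,p}(Omega), g being the weak gradient of u.\<close>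
definition W1p :: "'a::euclidean_space set \<Rightarrow> real \<Rightarrow> ('a \<Rightarrow> real) \<Rightarrow> ('a \<Rightarrow> 'a) \<Rightarrow> bool" where
  "W1p \<Omega> p u g \<longleftrightarrow> Lp \<Omega> p u \<and> Lp \<Omega> p g \<and> weak_grad \<Omega> u g"

text \<open>(u,g) in W_0^{1,p}(Omega): closure of C_c^infinity(Omega) in the W^{1,p} norm.\<close>
definition W01p :: "'a::euclidean_space set \<Rightarrow> real \<Rightarrow> ('a \<Rightarrow> real) \<Rightarrow> ('a \<Rightarrow> 'a) \<Rightarrow> bool" where
  "W01p \<Omega> p u g \<longleftrightarrow> W1p \<Omega> p u g \<and>
     (\<exists>\<phi>::nat \<Rightarrow> 'a \<Rightarrow> real. (\<forall>n. test_fun \<Omega> (\<phi> n)) \<and>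
        ((\<lambda>n. (LINT x:\<Omega>|lebesgue. \<bar>\<phi> n x - u x\<bar> powr p)
             + (LINT x:\<Omega>|lebesgue. norm (grad (\<phi> n) x - g x) powr p)) \<longlonglongrightarrow> 0))"

text \<open>First eigenvalue lambda_1(p,q) on Omega, as the infimum of the Rayleigh quotient.\<close>
definition lambda1 :: "'a::euclidean_space set \<Rightarrow> real \<Rightarrow> real \<Rightarrow> real \<Rightarrow> real \<Rightarrow> real" where
  "lambda1 \<Omega> p q \<alpha> \<beta> = Inf {((1/p) * (LINT x:\<Omega>|lebesgue. norm (gu x) powr p)
        + (1/q) * (LINT x:\<Omega>|lebesgue. norm (gv x) powr q))
        / (LINT x:\<Omega>|lebesgue. \<bar>u x\<bar> powr \<alpha> * \<bar>v x\<bar> powr \<beta>) | u gu v gv.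
      W01p \<Omega> p u gu \<and> W01p \<Omega> q v gv \<and>
      (LINT x:\<Omega>|lebesgue. \<bar>u x\<bar> powr \<alpha> * \<bar>v x\<bar> powr \<beta>) > 0}"

text \<open>The open cube Q_t = (0,t)^N.\<close>
definition cube :: "real \<Rightarrow> 'a::euclidean_space set" where
  "cube t = box 0 (t *\<^sub>R One)"

end

theory Submission
  imports Defs "HOL-Computational_Algebra.Polynomial"
begin


lemma fd_at: "(f has_derivative f') (at x) \<Longrightarrow> frechet_derivative f (at x) = f'"
  using frechet_derivative_at by metis

lemma Ck_cont: "Ck k f \<Longrightarrow> continuous_on UNIV f"
  by (cases k) (auto intro: differentiable_imp_continuous_on)

lemma Ck_mono: "Ck (Suc k) f \<Longrightarrow> Ck k f"
proof (induction k arbitrary: f)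
  case 0 then show ?case by (auto intro: differentiable_imp_continuous_on)
next
  case (Suc k) then show ?case by (metis Ck.simps(2))
qed

lemma Ck_SucI:
  assumes "\<And>x. (f has_derivative f' x) (at x)"
    and "\<And>i. i \<in> Basis \<Longrightarrow> Ck k (\<lambda>x. f' x i)"
  shows "Ck (Suc k) f"
proof -
  have "f differentiable_on UNIV" using assms(1) unfolding differentiable_on_def differentiable_def by blast
  moreover have "(\<lambda>x. frechet_derivative f (at x) i) = (\<lambda>x. f' x i)" for i
    using fd_at[OF assms(1)] by auto
  ultimately show ?thesis using assms(2) by simp
qed

lemma Ck_D:
  assumes "Ck (Suc k) f"
  shows "\<And>x. (f has_derivative frechet_derivative f (at x)) (at x)"
    and "\<And>i. i \<in> Basis \<Longrightarrow> Ck k (\<lambda>x. frechet_derivative f (at x) i)"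
  using assms by (auto simp: differentiable_on_def frechet_derivative_works[symmetric])

lemma Ck_const: "Ck k (\<lambda>x. a)"
proof (induction k arbitrary: a)
  case 0 then show ?case by simp
next
  case (Suc k)
  show ?case by (rule Ck_SucI[where f'="\<lambda>x h. 0"]) (auto intro: derivative_eq_intros Suc)
qed

lemma Ck_add: "Ck k f \<Longrightarrow> Ck k g \<Longrightarrow> Ck k (\<lambda>x. f x + g x)"
proof (induction k arbitrary: f g)
  case 0 then show ?case by (auto intro: continuous_intros)
next
  case (Suc k)
  show ?case
    apply (rule Ck_SucI[where f'="\<lambda>x h. frechet_derivative f (at x) h + frechet_derivative g (at x) h"])
    using Ck_D[OF Suc.prems(1)] Ck_D[OF Suc.prems(2)] Suc.IH
    by (auto intro!: derivative_eq_intros)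
qed

lemma Ck_mult: "Ck k f \<Longrightarrow> Ck k g \<Longrightarrow> Ck k (\<lambda>x. f x * g x)"
proof (induction k arbitrary: f g)
  case 0 then show ?case by (auto intro: continuous_intros)
next
  case (Suc k)
  show ?case
    apply (rule Ck_SucI[where f'="\<lambda>x h. f x * frechet_derivative g (at x) h + frechet_derivative f (at x) h * g x"])
    using Ck_D[OF Suc.prems(1)] Ck_D[OF Suc.prems(2)] Ck_mono[OF Suc.prems(1)] Ck_mono[OF Suc.prems(2)]
    by (auto intro!: derivative_eq_intros Suc.IH Ck_add)
qed

lemma Ck_affine: "Ck k (\<lambda>x. a + x \<bullet> w)"
proof (induction k arbitrary: a)
  case 0 then show ?case by (simp add: continuous_on_add continuous_on_inner continuous_on_id continuous_on_const)
next
  case (Suc k)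
  show ?case
    by (rule Ck_SucI[where f'="\<lambda>x h. h \<bullet> w"]) (auto intro!: derivative_eq_intros Ck_const)
qed

definition smooth1 :: "(nat \<Rightarrow> real \<Rightarrow> real) \<Rightarrow> bool" where
  "smooth1 D \<longleftrightarrow> (\<forall>n x. (D n has_real_derivative D (Suc n) x) (at x))"

lemma Ck_comp: "smooth1 D \<Longrightarrow> Ck k g \<Longrightarrow> Ck k (\<lambda>x. D 0 (g x))"
proof (induction k arbitrary: D g)
  case 0
  have "continuous_on UNIV (D 0)"
    using 0(1) unfolding smooth1_def
    by (meson DERIV_isCont continuous_at_imp_continuous_on)
  then show ?case using 0(2) by (auto intro: continuous_on_compose2)
next
  case (Suc k)
  have sD: "smooth1 (\<lambda>n. D (Suc n))" using Suc.prems(1) by (simp add: smooth1_def)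
  have dD: "\<And>y. (D 0 has_derivative (\<lambda>h. D 1 y * h)) (at y)"
  proof -
    fix y have "(D 0 has_real_derivative D 1 y) (at y)" using Suc.prems(1) unfolding smooth1_def by simp
    then show "(D 0 has_derivative (\<lambda>h. D 1 y * h)) (at y)" by (simp add: has_field_derivative_def)
  qed
  show ?case
    apply (rule Ck_SucI[where f'="\<lambda>x h. D 1 (g x) * frechet_derivative g (at x) h"])
     apply (rule has_derivative_compose[OF Ck_D(1)[OF Suc.prems(2)] dD])
    apply (rule Ck_mult)
    using Suc.IH[OF sD Ck_mono[OF Suc.prems(2)]] Ck_D(2)[OF Suc.prems(2)] by auto
qed

lemma Ck_scale: "Ck k f \<Longrightarrow> Ck k (\<lambda>y. b * f (c *\<^sub>R y))"
proof (induction k arbitrary: f b)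
  case 0 then show ?case by (auto intro!: continuous_intros intro: continuous_on_compose2[OF Ck_cont[OF 0]])
next
  case (Suc k)
  show ?case
    apply (rule Ck_SucI[where f'="\<lambda>y h. (b * c) * frechet_derivative f (at (c *\<^sub>R y)) h"])
    subgoal for x
    proof -
      have l: "linear (frechet_derivative f (at (c *\<^sub>R x)))"
        using has_derivative_linear[OF Ck_D(1)[OF Suc.prems]] by blast
      have "((\<lambda>y. f (c *\<^sub>R y)) has_derivative (\<lambda>h. frechet_derivative f (at (c *\<^sub>R x)) (c *\<^sub>R h))) (at x)"
        using has_derivative_compose[of "\<lambda>y. c *\<^sub>R y" "\<lambda>h. c *\<^sub>R h" x UNIV f, OF _ Ck_D(1)[OF Suc.prems]]
        by (simp add: bounded_linear_scaleR_right bounded_linear_imp_has_derivative)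
      then have "((\<lambda>y. b * f (c *\<^sub>R y)) has_derivative (\<lambda>h. b * frechet_derivative f (at (c *\<^sub>R x)) (c *\<^sub>R h))) (at x)"
        by (auto intro!: derivative_eq_intros)
      then show ?thesis using linear_cmul[OF l] by (simp add: mult.assoc)
    qed
    using Suc.IH Ck_D(2)[OF Suc.prems] by auto
qed



fun bP :: "nat \<Rightarrow> real poly" where
  "bP 0 = 1"
| "bP (Suc n) = pCons 0 (pCons 0 (bP n - pderiv (bP n)))"

definition bD :: "nat \<Rightarrow> real \<Rightarrow> real" where
  "bD n s = (if 0 < s then poly (bP n) (inverse s) * exp (- inverse s) else 0)"

lemma poly_exp_lim: fixes q :: "real poly" shows "((\<lambda>y. poly q y * exp (- y)) \<longlongrightarrow> 0) at_top"
proof -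
  have "((\<lambda>y. \<Sum>i\<le>degree q. coeff q i * (y ^ i / exp y)) \<longlongrightarrow> (\<Sum>i\<le>degree q. coeff q i * 0)) at_top"
    by (intro tendsto_sum tendsto_mult tendsto_const tendsto_power_div_exp_0)
  moreover have "(\<Sum>i\<le>degree q. coeff q i * (y ^ i / exp y)) = poly q y * exp (- y)" for y
    by (simp add: poly_altdef sum_distrib_right exp_minus divide_inverse mult.assoc)
  ultimately show ?thesis by simp
qed

lemma poly_inv_exp_lim: fixes q :: "real poly" shows "((\<lambda>s. poly q (inverse s) * exp (- inverse s)) \<longlongrightarrow> 0) (at_right 0)"
  using filterlim_compose[OF poly_exp_lim filterlim_inverse_at_top_right] by simp

lemma bD_deriv: "(bD n has_real_derivative bD (Suc n) x) (at x)"
proof -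
  consider "x > 0" | "x < 0" | "x = 0" by linarith
  then show ?thesis
  proof cases
    case 1
    have "((\<lambda>s. poly (bP n) (inverse s) * exp (- inverse s)) has_real_derivative
       poly (pderiv (bP n)) (inverse x) * (- (inverse x ^ 2)) * exp (- inverse x)
       + poly (bP n) (inverse x) * (exp (- inverse x) * (inverse x ^ 2))) (at x)"
      using 1 by (auto intro!: derivative_eq_intros DERIV_chain2[OF poly_DERIV] simp: power2_eq_square)
    moreover have "poly (pderiv (bP n)) (inverse x) * (- (inverse x ^ 2)) * exp (- inverse x)
       + poly (bP n) (inverse x) * (exp (- inverse x) * (inverse x ^ 2)) = bD (Suc n) x"
      using 1 by (simp add: bD_def algebra_simps power2_eq_square)
    ultimately have "((\<lambda>s. poly (bP n) (inverse s) * exp (- inverse s)) has_real_derivative bD (Suc n) x) (at x)"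
      by simp
    then show ?thesis
      by (rule has_field_derivative_transform_within_open[where S="{0<..}"]) (use 1 in \<open>auto simp: bD_def\<close>)
  next
    case 2
    have "((\<lambda>s. 0) has_real_derivative bD (Suc n) x) (at x)" using 2 by (simp add: bD_def)
    then show ?thesis
      by (rule has_field_derivative_transform_within_open[where S="{..<0}"]) (use 2 in \<open>auto simp: bD_def\<close>)
  next
    case 3
    have r: "((\<lambda>y. (bD n y - bD n 0) / (y - 0)) \<longlongrightarrow> 0) (at_right 0)"
    proof (rule Lim_transform_eventually[OF poly_inv_exp_lim[of "pCons 0 (bP n)"]])
      show "\<forall>\<^sub>F y in at_right 0. poly (pCons 0 (bP n)) (inverse y) * exp (- inverse y) = (bD n y - bD n 0) / (y - 0)"
        using eventually_at_right_less[of "0::real"]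
        by eventually_elim (simp add: bD_def field_simps)
    qed
    have l: "((\<lambda>y. (bD n y - bD n 0) / (y - 0)) \<longlongrightarrow> 0) (at_left 0)"
    proof (rule Lim_transform_eventually[OF tendsto_const])
      show "\<forall>\<^sub>F y in at_left 0. 0 = (bD n y - bD n 0) / (y - (0::real))"
        using eventually_at_left_real[of "-1" 0, OF neg_less_0_iff_less[THEN iffD2, OF zero_less_one]]
        by eventually_elim (auto simp: bD_def)
    qed
    have "((\<lambda>y. (bD n y - bD n 0) / (y - 0)) \<longlongrightarrow> 0) (at 0)"
      using filterlim_split_at[OF l r] .
    then have "(bD n has_real_derivative 0) (at 0)" by (simp add: has_field_derivative_iff)
    then show ?thesis using 3 by (simp add: bD_def)
  qed
qed

lemma smooth1_bD: "smooth1 bD"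
  unfolding smooth1_def using bD_deriv by blast

lemma bD0: "bD 0 s = (if 0 < s then exp (- inverse s) else 0)"
  by (simp add: bD_def)



lemma lebesgue_affine_eq:
  fixes t :: "'a::euclidean_space"
  assumes c: "c \<noteq> 0"
  shows "lebesgue = density (distr lebesgue lebesgue (\<lambda>x. t + c *\<^sub>R x)) (\<lambda>_. \<bar>c\<bar> ^ DIM('a))"
    and "(\<lambda>x. t + c *\<^sub>R x) \<in> lebesgue \<rightarrow>\<^sub>M lebesgue"
proof -
  have eq: "(\<lambda>x. t + (\<Sum>j\<in>Basis. (c * (x \<bullet> j)) *\<^sub>R j)) = (\<lambda>x::'a. t + c *\<^sub>R x)"
    unfolding scaleR_scaleR[symmetric] scaleR_sum_right[symmetric] euclidean_representation by simp
  show "lebesgue = density (distr lebesgue lebesgue (\<lambda>x. t + c *\<^sub>R x)) (\<lambda>_. \<bar>c\<bar> ^ DIM('a))"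
    using lebesgue_affine_euclidean[of "\<lambda>_. c" t] c unfolding eq by (simp add: prod_constant)
  show "(\<lambda>x. t + c *\<^sub>R x) \<in> lebesgue \<rightarrow>\<^sub>M lebesgue"
    using lebesgue_affine_measurable[of "\<lambda>_. c" t] c unfolding eq by simp
qed

lemma nn_integral_affine_lebesgue:
  fixes t :: "'a::euclidean_space"
  assumes f[measurable]: "f \<in> borel_measurable lebesgue" and c: "c \<noteq> 0"
  shows "(\<integral>\<^sup>+x. f x \<partial>lebesgue) = ennreal (\<bar>c\<bar> ^ DIM('a)) * (\<integral>\<^sup>+x. f (t + c *\<^sub>R x) \<partial>lebesgue)"
proof -
  note m = lebesgue_affine_eq(2)[OF c, of t]
  have "(\<integral>\<^sup>+x. f x \<partial>lebesgue) = (\<integral>\<^sup>+x. f x \<partial>density (distr lebesgue lebesgue (\<lambda>x. t + c *\<^sub>R x)) (\<lambda>_. \<bar>c\<bar> ^ DIM('a)))"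
    using lebesgue_affine_eq(1)[OF c, of t] by auto
  also have "\<dots> = \<integral>\<^sup>+ x. ennreal (\<bar>c\<bar> ^ DIM('a)) * f x \<partial>distr lebesgue lebesgue (\<lambda>x. t + c *\<^sub>R x)"
    by (subst nn_integral_density) auto
  also have "\<dots> = ennreal (\<bar>c\<bar> ^ DIM('a)) * integral\<^sup>N (distr lebesgue lebesgue (\<lambda>x. t + c *\<^sub>R x)) f"
    using f measurable_distr_eq1 nn_integral_cmult by blast
  also have "\<dots> = ennreal (\<bar>c\<bar> ^ DIM('a)) * (\<integral>\<^sup>+x. f (t + c *\<^sub>R x) \<partial>lebesgue)"
    using m by (subst nn_integral_distr) (force+)
  finally show ?thesis .
qed

lemma integrable_affine_lebesgue:
  fixes f :: "'a::euclidean_space \<Rightarrow> real"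
  assumes f: "integrable lebesgue f" and c: "c \<noteq> 0"
  shows "integrable lebesgue (\<lambda>x. f (t + c *\<^sub>R x))"
proof -
  have "(\<lambda>x. norm (f x)) \<in> borel_measurable lebesgue"
    by (simp add: borel_measurable_integrable f)
  moreover have "(\<lambda>x. f (t + c *\<^sub>R x)) \<in> borel_measurable lebesgue"
    using borel_measurable_affine[of f c t] f c by (simp add: borel_measurable_integrable)
  ultimately show ?thesis
    using f c unfolding integrable_iff_bounded
    by (subst (asm) nn_integral_affine_lebesgue[where c=c and t=t]) (auto simp: ennreal_mult_less_top)
qed

lemma integrable_affine_lebesgue_iff:
  fixes f :: "'a::euclidean_space \<Rightarrow> real"
  assumes c: "c \<noteq> 0"
  shows "integrable lebesgue (\<lambda>x. f (t + c *\<^sub>R x)) \<longleftrightarrow> integrable lebesgue f"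
proof
  assume "integrable lebesgue (\<lambda>x. f (t + c *\<^sub>R x))"
  from integrable_affine_lebesgue[OF this, of "1/c" "- t /\<^sub>R c"] c show "integrable lebesgue f"
    by (simp add: algebra_simps)
qed (rule integrable_affine_lebesgue[OF _ c])

lemma integral_affine_lebesgue:
  fixes f :: "'a::euclidean_space \<Rightarrow> real"
  assumes c: "c \<noteq> 0"
  shows "(\<integral>x. f x \<partial>lebesgue) = \<bar>c\<bar> ^ DIM('a) * (\<integral>x. f (t + c *\<^sub>R x) \<partial>lebesgue)"
proof cases
  assume "integrable lebesgue f"
  moreover note lebesgue_affine_eq(2)[OF c, of t]
  ultimately show ?thesis
    by (subst lebesgue_affine_eq(1)[OF c, of t]) (auto simp: integral_density integral_distr)
next
  assume "\<not> integrable lebesgue f" with c show ?thesis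
    by (simp add: integrable_affine_lebesgue_iff not_integrable_integral_eq)
qed



lemma cont_meas: "continuous_on UNIV f \<Longrightarrow> f \<in> borel_measurable lebesgue"
  using continuous_imp_measurable_on_sets_lebesgue[of UNIV f] by (simp add: lebesgue_on_UNIV_eq)

lemma int_cont_bounded:
  fixes f :: "'a::euclidean_space \<Rightarrow> real"
  assumes f: "continuous_on UNIV f" and B: "bounded B" and z: "\<And>x. x \<notin> B \<Longrightarrow> f x = 0"
  shows "integrable lebesgue f"
proof -
  obtain a where a: "B \<subseteq> cbox (-a) a" using bounded_subset_cbox_symmetric[OF B] by blast
  have "set_integrable lebesgue (cbox (-a) a) f"
    using absolutely_integrable_continuous[OF continuous_on_subset[OF f]] by blast
  moreover have "(\<lambda>x. indicator (cbox (-a) a) x *\<^sub>R f x) = f"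
    using a z by (auto simp: indicator_def fun_eq_iff)
  ultimately show ?thesis unfolding set_integrable_def by simp
qed

lemma ibp0:
  fixes h :: "'a::euclidean_space \<Rightarrow> real"
  assumes h: "Ck 1 h" and B: "bounded B" and z: "\<And>x. x \<notin> B \<Longrightarrow> h x = 0" and i: "i \<in> Basis"
  shows "integrable lebesgue (\<lambda>x. frechet_derivative h (at x) i)"
    and "integral\<^sup>L lebesgue (\<lambda>x. frechet_derivative h (at x) i) = 0"
proof -
  define d where "d x = frechet_derivative h (at x) i" for x
  have hd: "\<And>x. (h has_derivative frechet_derivative h (at x)) (at x)"
    using Ck_D(1)[of 0 h] h by simp
  have dc: "continuous_on UNIV d"
    using Ck_D(2)[of 0 h i] h i unfolding d_def by simp
  have hc: "continuous_on UNIV h" using Ck_cont[OF h] .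
  obtain R where R0: "\<And>x. x \<in> B \<Longrightarrow> norm x \<le> R" "0 < R"
    using B unfolding bounded_pos by blast
  have R: "B \<subseteq> cball 0 R" "0 \<le> R" using R0 by (auto simp: dist_norm)
  have ni: "norm i = 1" using i by simp
  have "bounded (d ` cball 0 (R+2))"
    by (intro compact_imp_bounded compact_continuous_image continuous_on_subset[OF dc]) auto
  then obtain M where M: "\<And>y. y \<in> cball 0 (R+2) \<Longrightarrow> \<bar>d y\<bar> \<le> M"
    unfolding bounded_iff by (metis imageI real_norm_def)
  define e :: "nat \<Rightarrow> real" where "e n = inverse (real (Suc n))" for n
  have e: "0 < e n" "e n \<le> 1" for n by (auto simp: e_def field_simps)
  define s where "s n x = (h (x + e n *\<^sub>R i) - h x) / e n" for n x
  define w where "w x = M * indicator (cball (0::'a) (R+1)) x" for x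
  have hint: "integrable lebesgue h"
    by (rule int_cont_bounded[OF hc B z])
  have sint: "integral\<^sup>L lebesgue (s n) = 0" for n
  proof -
    have i1: "integrable lebesgue (\<lambda>x. h (e n *\<^sub>R i + 1 *\<^sub>R x))"
      using integrable_affine_lebesgue[OF hint, of 1 "e n *\<^sub>R i"] by simp
    have "integral\<^sup>L lebesgue h = integral\<^sup>L lebesgue (\<lambda>x. h (e n *\<^sub>R i + 1 *\<^sub>R x))"
      using integral_affine_lebesgue[of 1 h "e n *\<^sub>R i"] by simp
    then show ?thesis using i1 hint unfolding s_def
      by (simp add: add.commute)
  qed
  have meas_s: "s n \<in> borel_measurable lebesgue" for n
    unfolding s_def
    by (intro borel_measurable_divide borel_measurable_diff cont_meas continuous_on_compose2[OF hc]) (auto intro!: continuous_intros)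
  have wint: "integrable lebesgue w"
    unfolding w_def using lmeasurable_cball[of "0::'a" "R+1"]
    by (intro integrable_mult_right integrable_real_indicator) (auto simp: fmeasurable_def)
  have lim: "(\<lambda>n. s n x) \<longlonglongrightarrow> d x" for x
  proof -
    have "((\<lambda>t. x + t *\<^sub>R i) has_derivative (\<lambda>t. t *\<^sub>R i)) (at 0)"
      by (auto intro!: derivative_eq_intros)
    from has_derivative_compose[OF this, of h "frechet_derivative h (at x)"] hd[of x]
    have "((\<lambda>t. h (x + t *\<^sub>R i)) has_derivative (\<lambda>t. frechet_derivative h (at x) (t *\<^sub>R i))) (at 0)"
      by simp
    moreover have "(\<lambda>t. frechet_derivative h (at x) (t *\<^sub>R i)) = (\<lambda>t. d x * t)"
      using linear_cmul[OF has_derivative_linear[OF hd[of x]]] by (auto simp: d_def fun_eq_iff)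
    ultimately have "((\<lambda>t. h (x + t *\<^sub>R i)) has_real_derivative d x) (at 0)"
      by (simp add: has_field_derivative_def)
    then have "((\<lambda>t. (h (x + t *\<^sub>R i) - h x) / t) \<longlongrightarrow> d x) (at 0)"
      by (simp add: has_field_derivative_iff)
    then have l: "((\<lambda>t. (h (x + t *\<^sub>R i) - h x) / t) \<longlongrightarrow> d x) (at_right 0)"
      by (simp add: filterlim_at_split)
    have "filterlim e (at_right 0) sequentially"
      by (rule tendsto_imp_filterlim_at_right) (use LIMSEQ_inverse_real_of_nat in \<open>auto simp: e_def[abs_def]\<close>)
    from filterlim_compose[OF l this] show ?thesis by (simp add: s_def o_def)
  qed
  have bnd: "norm (s n x) \<le> w x" for n x
  proof (cases "x \<in> cball 0 (R+1)")
    case True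
    have "\<exists>z. 0 < z \<and> z < e n \<and> h (x + e n *\<^sub>R i) - h (x + 0 *\<^sub>R i) = (e n - 0) * d (x + z *\<^sub>R i)"
    proof (rule MVT2[OF e(1)])
      fix t :: real
      have "((\<lambda>t. (x + t *\<^sub>R i)) has_derivative (\<lambda>t. t *\<^sub>R i)) (at t)"
        by (auto intro!: derivative_eq_intros)
      from has_derivative_compose[OF this hd[of "x + t *\<^sub>R i"]]
      have "((\<lambda>t. h (x + t *\<^sub>R i)) has_derivative (\<lambda>u. frechet_derivative h (at (x + t *\<^sub>R i)) (u *\<^sub>R i))) (at t)" .
      moreover have "(\<lambda>u. frechet_derivative h (at (x + t *\<^sub>R i)) (u *\<^sub>R i)) = (\<lambda>u. d (x + t *\<^sub>R i) * u)"
        using linear_cmul[OF has_derivative_linear[OF hd[of "x + t *\<^sub>R i"]]] by (auto simp: d_def fun_eq_iff)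
      ultimately show "((\<lambda>t. h (x + t *\<^sub>R i)) has_real_derivative d (x + t *\<^sub>R i)) (at t)"
        by (simp add: has_field_derivative_def)
    qed
    then obtain z where z1: "0 < z" "z < e n" and zeq: "h (x + e n *\<^sub>R i) - h x = e n * d (x + z *\<^sub>R i)"
      by auto
    have "norm (x + z *\<^sub>R i) \<le> norm x + norm (z *\<^sub>R i)" by (rule norm_triangle_ineq)
    also have "\<dots> \<le> R + 2" using True z1 e[of n] ni by (auto simp: dist_norm)
    finally have "\<bar>d (x + z *\<^sub>R i)\<bar> \<le> M" by (intro M) auto
    then show ?thesis using True zeq e[of n] by (simp add: s_def w_def)
  next
    case False
    then have nx: "norm x > R + 1" by (auto simp: dist_norm)
    have "x \<notin> B" using R0 nx by force
    moreover have "x + e n *\<^sub>R i \<notin> B"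
    proof
      assume "x + e n *\<^sub>R i \<in> B"
      then have "norm (x + e n *\<^sub>R i) \<le> R" using R0 by blast
      moreover have "norm x \<le> norm (x + e n *\<^sub>R i) + norm (e n *\<^sub>R i)"
        by (metis add_diff_cancel norm_triangle_ineq4)
      ultimately show False using nx e[of n] ni by auto
    qed
    ultimately show ?thesis using False by (simp add: s_def w_def z)
  qed
  have dm: "d \<in> borel_measurable lebesgue" by (rule cont_meas[OF dc])
  have ae1: "AE x in lebesgue. (\<lambda>n. s n x) \<longlonglongrightarrow> d x" using lim by simp
  have ae2: "\<And>n. AE x in lebesgue. norm (s n x) \<le> w x" using bnd by simp
  show "integrable lebesgue (\<lambda>x. frechet_derivative h (at x) i)"
    using integrable_dominated_convergence[where s=s, OF dm meas_s wint ae1 ae2] unfolding d_def by simp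
  have "(\<lambda>n. integral\<^sup>L lebesgue (s n)) \<longlonglongrightarrow> integral\<^sup>L lebesgue d"
    using integral_dominated_convergence[where s=s, OF dm meas_s wint ae1 ae2] .
  then show "integral\<^sup>L lebesgue (\<lambda>x. frechet_derivative h (at x) i) = 0"
    using sint unfolding d_def by (simp add: LIMSEQ_const_iff)
qed



lemma grad_inner: "i \<in> Basis \<Longrightarrow> grad f x \<bullet> i = frechet_derivative f (at x) i"
  by (simp add: grad_def inner_sum_left inner_Basis if_distrib sum.delta cong: if_cong)

lemma Cinf_Ck: "Cinf f \<Longrightarrow> Ck k f" by (simp add: Cinf_def)

definition c0 :: "'a::euclidean_space" where "c0 = (1/2) *\<^sub>R One"
definition g0 :: "'a::euclidean_space \<Rightarrow> real" where "g0 x = 1/16 - (x - c0) \<bullet> (x - c0)"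
definition phi0 :: "'a::euclidean_space \<Rightarrow> real" where "phi0 x = bD 0 (g0 x)"

lemma g0_deriv: "(g0 has_derivative (\<lambda>h. -2 * ((x - c0) \<bullet> h))) (at x)"
  unfolding g0_def[abs_def]
  by (auto intro!: derivative_eq_intros simp: inner_commute algebra_simps)

lemma Ck_g0: "Ck k (g0 :: 'a::euclidean_space \<Rightarrow> real)"
proof (cases k)
  case 0 then show ?thesis unfolding g0_def[abs_def] by (simp add: continuous_on_diff continuous_on_const continuous_on_inner continuous_on_id)
next
  case (Suc m)
  have "Ck (Suc m) (g0 :: 'a \<Rightarrow> real)"
  proof (rule Ck_SucI[OF g0_deriv])
    fix i :: 'a assume "i \<in> Basis"
    have "(\<lambda>x. -2 * ((x - c0) \<bullet> i)) = (\<lambda>x. 2 * (c0 \<bullet> i) + x \<bullet> (-2 *\<^sub>R i))"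
      by (auto simp: fun_eq_iff algebra_simps inner_diff_left)
    then show "Ck m (\<lambda>x. -2 * ((x - c0) \<bullet> i))" by (simp only: Ck_affine)
  qed
  then show ?thesis using Suc by simp
qed

lemma Cinf_phi0: "Cinf (phi0 :: 'a::euclidean_space \<Rightarrow> real)"
  unfolding Cinf_def phi0_def[abs_def] using Ck_comp[OF smooth1_bD Ck_g0] by blast

lemma phi0_nz: "phi0 x \<noteq> 0 \<Longrightarrow> norm (x - c0) < 1/4"
proof -
  assume "phi0 x \<noteq> 0"
  then have "g0 x > 0" by (auto simp: phi0_def bD0 split: if_splits)
  moreover have "(x - c0) \<bullet> (x - c0) = norm (x - c0) ^ 2" by (simp add: power2_norm_eq_inner)
  ultimately have "norm (x - c0) ^ 2 < (1/4) ^ 2" by (simp add: g0_def power2_eq_square)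
  then show ?thesis by (rule power_less_imp_less_base) auto
qed

lemma cball_sub_cube: "cball (c0 :: 'a::euclidean_space) (1/4) \<subseteq> cube 1"
proof
  fix x :: 'a assume "x \<in> cball c0 (1/4)"
  then have n: "norm (x - c0) \<le> 1/4" by (simp add: dist_norm norm_minus_commute)
  show "x \<in> cube 1" unfolding cube_def mem_box
  proof (intro conjI ballI)
    fix i :: 'a assume i: "i \<in> Basis"
    have "\<bar>(x - c0) \<bullet> i\<bar> \<le> 1/4" using Basis_le_norm[OF i, of "x - c0"] n by linarith
    moreover have "(x - c0) \<bullet> i = x \<bullet> i - 1/2" using i by (simp add: c0_def inner_diff_left)
    ultimately have a: "\<bar>x \<bullet> i - 1/2\<bar> \<le> 1/4" by simp
    have "x \<bullet> i - 1/2 \<le> 1/4 \<and> - (x \<bullet> i - 1/2) \<le> 1/4" using abs_le_D1[OF a] abs_le_D2[OF a] by blast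
    then have "x \<bullet> i \<ge> 1/4" "x \<bullet> i \<le> 3/4" by linarith+
    then show "0 \<bullet> i < x \<bullet> i" "x \<bullet> i < (1 *\<^sub>R One) \<bullet> i"
      using i by auto
  qed
qed

lemma supp_phi0: "closure {x. phi0 x \<noteq> 0} \<subseteq> cball (c0 :: 'a::euclidean_space) (1/4)"
proof -
  have "{x. phi0 x \<noteq> 0} \<subseteq> cball (c0::'a) (1/4)"
  proof
    fix x :: 'a assume "x \<in> {x. phi0 x \<noteq> 0}"
    then have "norm (x - c0) < 1/4" using phi0_nz by blast
    then show "x \<in> cball c0 (1/4)" by (simp add: dist_norm norm_minus_commute)
  qed
  then show ?thesis by (rule closure_minimal) simp
qed

lemma test_phi0: "test_fun (cube 1) (phi0 :: 'a::euclidean_space \<Rightarrow> real)"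
  unfolding test_fun_def
proof (intro conjI)
  show "Cinf (phi0 :: 'a \<Rightarrow> real)" by (rule Cinf_phi0)
  show "compact (closure {x::'a. phi0 x \<noteq> 0})"
  proof -
    have "{x::'a. phi0 x \<noteq> 0} \<subseteq> cball c0 (1/4)" by (rule order_trans[OF closure_subset supp_phi0])
    then show ?thesis unfolding compact_closure by (rule bounded_subset[OF bounded_cball])
  qed
  show "closure {x::'a. phi0 x \<noteq> 0} \<subseteq> cube 1" by (rule order_trans[OF supp_phi0 cball_sub_cube])
qed

lemma test_zero: assumes "test_fun \<Omega> \<psi>" "x \<notin> \<Omega>" shows "\<psi> x = 0"
proof (rule ccontr)
  assume "\<psi> x \<noteq> 0"
  then have "x \<in> closure {x. \<psi> x \<noteq> 0}" using closure_subset[of "{x. \<psi> x \<noteq> 0}"] by blast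
  with assms show False unfolding test_fun_def by blast
qed

lemma set_int_cube1: "continuous_on UNIV (f :: 'a::euclidean_space \<Rightarrow> real) \<Longrightarrow> set_integrable lebesgue (cube 1) f"
  apply (rule set_integrable_subset[where A="cbox 0 One"])
  using absolutely_integrable_continuous[OF continuous_on_subset, of UNIV f 0 One]
  by (auto simp: cube_def box_subset_cbox)

lemma set_int_eq: "(\<And>x. x \<notin> A \<Longrightarrow> f x = 0) \<Longrightarrow> (LINT x:A|lebesgue. f x) = integral\<^sup>L lebesgue f"
  unfolding set_lebesgue_integral_def
  by (rule arg_cong[where f="integral\<^sup>L lebesgue"]) (auto simp: indicator_def fun_eq_iff)

lemma weak_grad_phi0: "weak_grad (cube 1) phi0 (grad (phi0 :: 'a::euclidean_space \<Rightarrow> real))"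
  unfolding weak_grad_def
proof (intro allI impI ballI conjI)
  fix \<psi> :: "'a \<Rightarrow> real" and i :: 'a
  assume t: "test_fun (cube 1) \<psi>" and i: "i \<in> Basis"
  have ps: "Cinf \<psi>" using t by (simp add: test_fun_def)
  have ph: "Cinf (phi0 :: 'a \<Rightarrow> real)" by (rule Cinf_phi0)
  let ?dps = "\<lambda>x. frechet_derivative \<psi> (at x) i"
  let ?dph = "\<lambda>x. frechet_derivative (phi0::'a\<Rightarrow>real) (at x) i"
  have c1: "continuous_on UNIV ?dps" using Ck_D(2)[OF Cinf_Ck[OF ps, of "Suc 0"] i] by simp
  have c2: "continuous_on UNIV ?dph" using Ck_D(2)[OF Cinf_Ck[OF ph, of "Suc 0"] i] by simp
  have c3: "continuous_on UNIV \<psi>" using Ck_cont[OF Cinf_Ck[OF ps, of 0]] .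
  have c4: "continuous_on UNIV (phi0::'a\<Rightarrow>real)" using Ck_cont[OF Cinf_Ck[OF ph, of 0]] .
  have z1: "x \<notin> cube 1 \<Longrightarrow> (phi0::'a\<Rightarrow>real) x = 0" for x :: 'a using test_zero[OF test_phi0] .
  have z2: "x \<notin> cube 1 \<Longrightarrow> \<psi> x = 0" for x :: 'a using test_zero[OF t] .
  show "set_integrable lebesgue (cube 1) (\<lambda>x. phi0 x * ?dps x)"
    by (rule set_int_cube1) (intro continuous_intros c1 c4)
  show "set_integrable lebesgue (cube 1) (\<lambda>x. (grad phi0 x \<bullet> i) * \<psi> x)"
    unfolding grad_inner[OF i] by (rule set_int_cube1) (intro continuous_intros c2 c3)
  define h where "h x = phi0 x * \<psi> x" for x
  have h1: "Ck 1 h" unfolding h_def by (intro Ck_mult Cinf_Ck ps ph)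
  have hz: "x \<notin> cube 1 \<Longrightarrow> h x = 0" for x using z1 by (simp add: h_def)
  have hd: "frechet_derivative h (at x) i = phi0 x * ?dps x + ?dph x * \<psi> x" for x
  proof -
    have "(h has_derivative (\<lambda>v. phi0 x * frechet_derivative \<psi> (at x) v + frechet_derivative phi0 (at x) v * \<psi> x)) (at x)"
      unfolding h_def using Ck_D(1)[OF Cinf_Ck[OF ps, of "Suc 0"]] Ck_D(1)[OF Cinf_Ck[OF ph, of "Suc 0"]]
      by (auto intro!: derivative_eq_intros)
    then show ?thesis by (simp add: fd_at)
  qed
  have b: "bounded (cube 1 :: 'a set)" by (simp add: cube_def)
  have I1: "integrable lebesgue (\<lambda>x. phi0 x * ?dps x)"
    by (rule int_cont_bounded[OF _ b]) (auto intro!: continuous_intros c1 c4 simp: z1)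
  have I2: "integrable lebesgue (\<lambda>x. ?dph x * \<psi> x)"
    by (rule int_cont_bounded[OF _ b]) (auto intro!: continuous_intros c2 c3 simp: z2)
  have "integral\<^sup>L lebesgue (\<lambda>x. frechet_derivative h (at x) i) = 0"
    by (rule ibp0(2)[OF h1 b hz i])
  then have "integral\<^sup>L lebesgue (\<lambda>x. phi0 x * ?dps x) + integral\<^sup>L lebesgue (\<lambda>x. ?dph x * \<psi> x) = 0"
    unfolding hd using I1 I2 by simp
  moreover have "(LINT x:cube 1|lebesgue. phi0 x * ?dps x) = integral\<^sup>L lebesgue (\<lambda>x. phi0 x * ?dps x)"
    by (rule set_int_eq) (simp add: z1)
  moreover have "(LINT x:cube 1|lebesgue. (grad phi0 x \<bullet> i) * \<psi> x) = integral\<^sup>L lebesgue (\<lambda>x. ?dph x * \<psi> x)"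
    unfolding grad_inner[OF i] by (rule set_int_eq) (simp add: z2)
  ultimately show "(LINT x:cube 1|lebesgue. phi0 x * ?dps x) = - (LINT x:cube 1|lebesgue. (grad phi0 x \<bullet> i) * \<psi> x)"
    by linarith
qed



lemma cube_sets: "cube r \<in> sets lebesgue"
  unfolding cube_def using lmeasurable_box fmeasurableD by blast

lemma cont_grad: "Ck (Suc k) f \<Longrightarrow> continuous_on UNIV (grad f)"
  unfolding grad_def[abs_def]
  by (intro continuous_on_sum continuous_on_scaleR continuous_on_const Ck_cont[OF Ck_D(2)]) auto

lemma set_meas_cont: fixes f :: "'a::euclidean_space \<Rightarrow> 'b::euclidean_space" shows "continuous_on UNIV f \<Longrightarrow> set_borel_measurable lebesgue (cube r) f"
  unfolding set_borel_measurable_def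
  by (rule borel_measurable_scaleR[OF borel_measurable_indicator[OF cube_sets] cont_meas])

lemma cont_phi0: "continuous_on UNIV (phi0 :: 'a::euclidean_space \<Rightarrow> real)"
  using Ck_cont[OF Cinf_Ck[OF Cinf_phi0, of 0]] .

lemma cont_gphi0: "continuous_on UNIV (grad (phi0 :: 'a::euclidean_space \<Rightarrow> real))"
  using cont_grad[OF Cinf_Ck[OF Cinf_phi0, of "Suc 0"]] .

lemma W01p_phi0:
  assumes p: "1 < p"
  shows "W01p (cube 1) p phi0 (grad (phi0 :: 'a::euclidean_space \<Rightarrow> real))"
  unfolding W01p_def W1p_def Lp_def
proof (intro conjI)
  show "set_borel_measurable lebesgue (cube 1) (phi0 :: 'a \<Rightarrow> real)" by (rule set_meas_cont[OF cont_phi0])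
  show "set_borel_measurable lebesgue (cube 1) (grad (phi0 :: 'a \<Rightarrow> real))" by (rule set_meas_cont[OF cont_gphi0])
  show "set_integrable lebesgue (cube 1) (\<lambda>x. norm ((phi0 :: 'a \<Rightarrow> real) x) powr p)"
    using p by (intro set_int_cube1 continuous_on_powr' continuous_on_norm cont_phi0 continuous_on_const) auto
  show "set_integrable lebesgue (cube 1) (\<lambda>x. norm (grad (phi0 :: 'a \<Rightarrow> real) x) powr p)"
    using p by (intro set_int_cube1 continuous_on_powr' continuous_on_norm cont_gphi0 continuous_on_const) auto
  show "weak_grad (cube 1) phi0 (grad (phi0 :: 'a \<Rightarrow> real))" by (rule weak_grad_phi0)
  show "\<exists>\<phi>::nat \<Rightarrow> 'a \<Rightarrow> real. (\<forall>n. test_fun (cube 1) (\<phi> n)) \<and>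
        ((\<lambda>n. (LINT x:cube 1|lebesgue. \<bar>\<phi> n x - phi0 x\<bar> powr p)
             + (LINT x:cube 1|lebesgue. norm (grad (\<phi> n) x - grad phi0 x) powr p)) \<longlonglongrightarrow> 0)"
    by (rule exI[of _ "\<lambda>n. phi0"]) (simp add: test_phi0)
qed

lemma denom_pos:
  fixes \<alpha> \<beta> :: real
  assumes a: "\<alpha> > 0" and b: "\<beta> > 0"
  shows "(LINT x:cube 1|lebesgue. \<bar>(phi0 :: 'a::euclidean_space \<Rightarrow> real) x\<bar> powr \<alpha> * \<bar>phi0 x\<bar> powr \<beta>) > 0"
proof -
  define F where "F x = \<bar>(phi0 :: 'a \<Rightarrow> real) x\<bar> powr \<alpha> * \<bar>phi0 x\<bar> powr \<beta>" for x
  define G where "G x = indicator (cube 1) x *\<^sub>R F x" for x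
  have Fc: "continuous_on UNIV F"
    unfolding F_def[abs_def]
    by (intro continuous_intros continuous_on_powr' cont_phi0) (auto simp: a b)
  have Gi: "integrable lebesgue G" using set_int_cube1[OF Fc] unfolding set_integrable_def G_def .
  have Gnn: "0 \<le> G x" for x by (simp add: G_def F_def)
  have eqG: "(LINT x:cube 1|lebesgue. F x) = integral\<^sup>L lebesgue G"
    by (simp add: set_lebesgue_integral_def G_def[abs_def])
  have phc: "phi0 (c0::'a) \<noteq> 0" by (simp add: phi0_def bD0 g0_def)
  then have Fc0: "F c0 \<noteq> 0" by (simp add: F_def)
  obtain e where e: "e > 0" "\<And>y. dist c0 y < e \<Longrightarrow> F y \<noteq> 0"
  proof -
    have "isCont F c0" using Fc by (simp add: continuous_on_eq_continuous_at)
    from continuous_at_avoid[OF this Fc0] show ?thesis using that by blast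
  qed
  define r where "r = min e (1/4)"
  have r: "r > 0" using e by (simp add: r_def)
  have ballsub: "ball (c0::'a) r \<subseteq> {x. G x \<noteq> 0}"
  proof
    fix y assume y: "y \<in> ball (c0::'a) r"
    then have "y \<in> cube 1" using cball_sub_cube ball_subset_cball[of c0 "1/4"] by (auto simp: r_def)
    moreover have "F y \<noteq> 0" using e(2) y by (auto simp: r_def)
    ultimately show "y \<in> {x. G x \<noteq> 0}" by (simp add: G_def)
  qed
  have "integral\<^sup>L lebesgue G \<noteq> 0"
  proof
    assume "integral\<^sup>L lebesgue G = 0"
    then have "AE x in lebesgue. G x = 0" using integral_nonneg_eq_0_iff_AE[OF Gi] Gnn by simp
    then obtain N where N: "{x \<in> space lebesgue. \<not> G x = 0} \<subseteq> N" "emeasure lebesgue N = 0" "N \<in> sets lebesgue"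
      by (rule AE_E)
    have "emeasure lebesgue (ball (c0::'a) r) \<le> emeasure lebesgue N"
      by (rule emeasure_mono) (use ballsub N in auto)
    then have "emeasure lebesgue (ball (c0::'a) r) = 0" using N(2) by simp
    then have "measure lebesgue (ball (c0::'a) r) = 0" by (simp add: measure_def)
    moreover have "measure lebesgue (ball (c0::'a) r) = measure lborel (ball (c0::'a) r)" by simp
    ultimately show False using r content_ball_gt_0_iff[of "c0::'a" r] by simp
  qed
  moreover have "integral\<^sup>L lebesgue G \<ge> 0" using Gnn by simp
  ultimately show ?thesis using eqG unfolding F_def by simp
qed



lemma cube_mem: "0 < s \<Longrightarrow> (s *\<^sub>R y \<in> cube (s * r)) \<longleftrightarrow> (y \<in> (cube r :: 'a::euclidean_space set))"
  by (simp add: cube_def mem_box inner_Basis zero_less_mult_iff)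

lemma cube_mem': "0 < s \<Longrightarrow> (x \<in> cube (s * r)) \<longleftrightarrow> (inverse s *\<^sub>R x \<in> (cube r :: 'a::euclidean_space set))"
  using cube_mem[of s "inverse s *\<^sub>R x" r] by simp

lemma TR:
  fixes f :: "'a::euclidean_space \<Rightarrow> real"
  assumes s: "0 < s"
  shows "set_integrable lebesgue (cube (s * r)) f \<longleftrightarrow> set_integrable lebesgue (cube r) (\<lambda>y. f (s *\<^sub>R y))"
    and "(LINT x:cube (s * r)|lebesgue. f x) = s ^ DIM('a) * (LINT y:cube r|lebesgue. f (s *\<^sub>R y))"
proof -
  define g where "g x = indicator (cube (s * r)) x *\<^sub>R f x" for x
  have g_eq: "(\<lambda>x. indicator (cube (s * r)) x *\<^sub>R f x) = g" by (simp add: g_def fun_eq_iff)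
  have gs: "(\<lambda>y. g (s *\<^sub>R y)) = (\<lambda>y. indicator (cube r) y *\<^sub>R f (s *\<^sub>R y))"
    using cube_mem[OF s] by (auto simp: g_def indicator_def fun_eq_iff)
  have i: "integrable lebesgue (\<lambda>y. g (s *\<^sub>R y)) \<longleftrightarrow> integrable lebesgue g"
    using integrable_affine_lebesgue_iff[of s g 0] s by simp
  have j: "integral\<^sup>L lebesgue g = \<bar>s\<bar> ^ DIM('a) * integral\<^sup>L lebesgue (\<lambda>y. g (s *\<^sub>R y))"
    using integral_affine_lebesgue[of s g 0] s by simp
  show "set_integrable lebesgue (cube (s * r)) f \<longleftrightarrow> set_integrable lebesgue (cube r) (\<lambda>y. f (s *\<^sub>R y))"
    unfolding set_integrable_def g_eq using i unfolding gs by simp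
  show "(LINT x:cube (s * r)|lebesgue. f x) = s ^ DIM('a) * (LINT y:cube r|lebesgue. f (s *\<^sub>R y))"
    unfolding set_lebesgue_integral_def g_eq using j s unfolding gs by simp
qed

lemma TM:
  fixes F :: "'a::euclidean_space \<Rightarrow> 'b::euclidean_space"
  assumes s: "0 < s" and F: "set_borel_measurable lebesgue (cube r) F"
  shows "set_borel_measurable lebesgue (cube (s * r)) (\<lambda>x. c *\<^sub>R F (inverse s *\<^sub>R x))"
proof -
  define h where "h x = indicator (cube r) x *\<^sub>R F x" for x
  have "(\<lambda>x. h (0 + inverse s *\<^sub>R x)) \<in> borel_measurable lebesgue"
    using borel_measurable_affine[of h "inverse s" 0] F s unfolding set_borel_measurable_def h_def[abs_def] by simp
  moreover have "(\<lambda>x. h (0 + inverse s *\<^sub>R x)) = (\<lambda>x. indicator (cube (s * r)) x *\<^sub>R F (inverse s *\<^sub>R x))"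
    using cube_mem'[OF s] by (auto simp: h_def indicator_def fun_eq_iff)
  ultimately have m: "(\<lambda>x. indicator (cube (s * r)) x *\<^sub>R F (inverse s *\<^sub>R x)) \<in> borel_measurable lebesgue"
    by metis
  have "(\<lambda>x. c *\<^sub>R (indicator (cube (s * r)) x *\<^sub>R F (inverse s *\<^sub>R x))) \<in> borel_measurable lebesgue"
    by (rule borel_measurable_scaleR[OF borel_measurable_const m])
  then show ?thesis unfolding set_borel_measurable_def by (simp add: scaleR_left_commute mult.commute)
qed

lemma fd_scale:
  assumes "(\<phi> has_derivative frechet_derivative \<phi> (at (c *\<^sub>R y))) (at (c *\<^sub>R y))"
  shows "frechet_derivative (\<lambda>y. b * \<phi> (c *\<^sub>R y)) (at y) = (\<lambda>h. (b * c) * frechet_derivative \<phi> (at (c *\<^sub>R y)) h)"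
proof -
  have l: "linear (frechet_derivative \<phi> (at (c *\<^sub>R y)))"
    using has_derivative_linear[OF assms] by blast
  have "((\<lambda>y. \<phi> (c *\<^sub>R y)) has_derivative (\<lambda>h. frechet_derivative \<phi> (at (c *\<^sub>R y)) (c *\<^sub>R h))) (at y)"
    using has_derivative_compose[of "\<lambda>y. c *\<^sub>R y" "\<lambda>h. c *\<^sub>R h" y UNIV \<phi>, OF _ assms]
    by (simp add: bounded_linear_scaleR_right bounded_linear_imp_has_derivative)
  then have "((\<lambda>y. b * \<phi> (c *\<^sub>R y)) has_derivative (\<lambda>h. b * frechet_derivative \<phi> (at (c *\<^sub>R y)) (c *\<^sub>R h))) (at y)"
    by (auto intro!: derivative_eq_intros)
  then show ?thesis using linear_cmul[OF l] by (simp add: fd_at mult.assoc)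
qed

lemma grad_scale:
  assumes "\<And>x. (\<phi> has_derivative frechet_derivative \<phi> (at x)) (at x)"
  shows "grad (\<lambda>y. b * \<phi> (c *\<^sub>R y)) x = (b * c) *\<^sub>R grad \<phi> (c *\<^sub>R x)"
  unfolding grad_def fd_scale[OF assms] by (simp add: scaleR_sum_right)

lemma test_Cinf: "test_fun \<Omega> \<phi> \<Longrightarrow> Cinf \<phi>" by (simp add: test_fun_def)

lemma test_deriv: assumes "test_fun \<Omega> \<phi>" shows "(\<phi> has_derivative frechet_derivative \<phi> (at x)) (at x)"
proof -
  have "Ck (Suc 0) \<phi>" using Cinf_Ck[OF test_Cinf[OF assms]] .
  then show ?thesis by (rule Ck_D(1))
qed

lemma test_scale:
  fixes \<phi> :: "'a::euclidean_space \<Rightarrow> real"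
  assumes t: "test_fun (cube R) \<phi>" and b: "b \<noteq> 0" and c: "0 < c"
  shows "test_fun (cube (inverse c * R)) (\<lambda>y. b * \<phi> (c *\<^sub>R y))"
  unfolding test_fun_def
proof (intro conjI)
  show "Cinf (\<lambda>y. b * \<phi> (c *\<^sub>R y))"
    using t unfolding Cinf_def test_fun_def by (auto intro: Ck_scale)
  have eq: "{y. b * \<phi> (c *\<^sub>R y) \<noteq> 0} = (\<lambda>x. inverse c *\<^sub>R x) ` {x. \<phi> x \<noteq> 0}"
  proof
    show "{y. b * \<phi> (c *\<^sub>R y) \<noteq> 0} \<subseteq> (\<lambda>x. inverse c *\<^sub>R x) ` {x. \<phi> x \<noteq> 0}"
    proof
      fix y assume "y \<in> {y. b * \<phi> (c *\<^sub>R y) \<noteq> 0}"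
      then have "c *\<^sub>R y \<in> {x. \<phi> x \<noteq> 0}" "y = inverse c *\<^sub>R (c *\<^sub>R y)" using c by auto
      then show "y \<in> (\<lambda>x. inverse c *\<^sub>R x) ` {x. \<phi> x \<noteq> 0}" by blast
    qed
    show "(\<lambda>x. inverse c *\<^sub>R x) ` {x. \<phi> x \<noteq> 0} \<subseteq> {y. b * \<phi> (c *\<^sub>R y) \<noteq> 0}"
      using b c by auto
  qed
  have cl: "closure {y. b * \<phi> (c *\<^sub>R y) \<noteq> 0} = (\<lambda>x. inverse c *\<^sub>R x) ` closure {x. \<phi> x \<noteq> 0}"
    unfolding eq
    by (rule closure_injective_linear_image[symmetric]) (use c in \<open>auto simp: linear_scaleR inj_on_def\<close>)
  show "compact (closure {y. b * \<phi> (c *\<^sub>R y) \<noteq> 0})"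
    unfolding cl by (rule compact_scaling) (use t in \<open>simp add: test_fun_def\<close>)
  show "closure {y. b * \<phi> (c *\<^sub>R y) \<noteq> 0} \<subseteq> cube (inverse c * R)"
    unfolding cl using t c cube_mem[of "inverse c" _ R] unfolding test_fun_def by auto
qed



lemma set_int_nonneg: "(\<And>x. 0 \<le> f x) \<Longrightarrow> 0 \<le> (LINT x:A|M. (f x :: real))"
  unfolding set_lebesgue_integral_def by (intro Bochner_Integration.integral_nonneg) (simp add: indicator_def)


lemma WS:
  fixes u :: "'a::euclidean_space \<Rightarrow> real" and gu :: "'a \<Rightarrow> 'a"
  assumes s: "0 < s" and p: "0 < p" and W: "W01p (cube r) p u gu"
  shows "W01p (cube (s * r)) p (\<lambda>x. s * u (inverse s *\<^sub>R x)) (\<lambda>x. gu (inverse s *\<^sub>R x))"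
proof -
  from W have Mu: "set_borel_measurable lebesgue (cube r) u"
    and Iu: "set_integrable lebesgue (cube r) (\<lambda>x. norm (u x) powr p)"
    and Mg: "set_borel_measurable lebesgue (cube r) gu"
    and Ig: "set_integrable lebesgue (cube r) (\<lambda>x. norm (gu x) powr p)"
    and WG: "weak_grad (cube r) u gu"
    and SEQ: "\<exists>\<phi>::nat \<Rightarrow> 'a \<Rightarrow> real. (\<forall>n. test_fun (cube r) (\<phi> n)) \<and>
        ((\<lambda>n. (LINT x:cube r|lebesgue. \<bar>\<phi> n x - u x\<bar> powr p)
             + (LINT x:cube r|lebesgue. norm (grad (\<phi> n) x - gu x) powr p)) \<longlonglongrightarrow> 0)"
    unfolding W01p_def W1p_def Lp_def by blast+
  let ?U = "\<lambda>x. s * u (inverse s *\<^sub>R x)"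
  let ?G = "\<lambda>x. gu (inverse s *\<^sub>R x)"
  have sinv: "inverse s *\<^sub>R (s *\<^sub>R y) = y" for y :: 'a using s by simp
  have nU: "norm (s * a) powr p = s powr p * norm a powr p" for a :: real
    using s by (simp add: abs_mult powr_mult)
  have L1: "set_borel_measurable lebesgue (cube (s * r)) ?U"
    using TM[OF s Mu, of s] by simp
  have L2: "set_borel_measurable lebesgue (cube (s * r)) ?G"
    using TM[OF s Mg, of 1] by simp
  have L3: "set_integrable lebesgue (cube (s * r)) (\<lambda>x. norm (?U x) powr p)"
    unfolding TR(1)[OF s] sinv nU using Iu by simp
  have L4: "set_integrable lebesgue (cube (s * r)) (\<lambda>x. norm (?G x) powr p)"
    unfolding TR(1)[OF s] sinv using Ig by simp
  have L5: "weak_grad (cube (s * r)) ?U ?G"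
    unfolding weak_grad_def
  proof (intro allI impI ballI conjI)
    fix \<psi> :: "'a \<Rightarrow> real" and i :: 'a
    assume t: "test_fun (cube (s * r)) \<psi>" and i: "i \<in> Basis"
    define \<psi>t where "\<psi>t y = 1 * \<psi> (s *\<^sub>R y)" for y
    have rr: "inverse s * (s * r) = r" using s by simp
    have tt: "test_fun (cube r) \<psi>t"
      using test_scale[OF t, of 1 s] s unfolding \<psi>t_def[abs_def] rr by simp
    have fdt: "frechet_derivative \<psi>t (at y) i = s * frechet_derivative \<psi> (at (s *\<^sub>R y)) i" for y
      unfolding \<psi>t_def[abs_def] fd_scale[OF test_deriv[OF t]] by simp
    from WG tt i have I1: "set_integrable lebesgue (cube r) (\<lambda>y. u y * frechet_derivative \<psi>t (at y) i)"
      and I2: "set_integrable lebesgue (cube r) (\<lambda>y. (gu y \<bullet> i) * \<psi>t y)"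
      and E: "(LINT y:cube r|lebesgue. u y * frechet_derivative \<psi>t (at y) i)
              = - (LINT y:cube r|lebesgue. (gu y \<bullet> i) * \<psi>t y)"
      unfolding weak_grad_def by blast+
    have e1: "(\<lambda>y. ?U (s *\<^sub>R y) * frechet_derivative \<psi> (at (s *\<^sub>R y)) i) = (\<lambda>y. u y * frechet_derivative \<psi>t (at y) i)"
      unfolding fdt sinv by (simp add: fun_eq_iff)
    have e2: "(\<lambda>y. (?G (s *\<^sub>R y) \<bullet> i) * \<psi> (s *\<^sub>R y)) = (\<lambda>y. (gu y \<bullet> i) * \<psi>t y)"
      unfolding sinv \<psi>t_def by simp
    show "set_integrable lebesgue (cube (s * r)) (\<lambda>x. ?U x * frechet_derivative \<psi> (at x) i)"
      unfolding TR(1)[OF s] e1 by (rule I1)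
    show "set_integrable lebesgue (cube (s * r)) (\<lambda>x. (?G x \<bullet> i) * \<psi> x)"
      unfolding TR(1)[OF s] e2 by (rule I2)
    show "(LINT x:cube (s * r)|lebesgue. ?U x * frechet_derivative \<psi> (at x) i)
          = - (LINT x:cube (s * r)|lebesgue. (?G x \<bullet> i) * \<psi> x)"
      unfolding TR(2)[OF s] e1 e2 E by simp
  qed
  from SEQ obtain \<phi> :: "nat \<Rightarrow> 'a \<Rightarrow> real" where tp: "\<And>n. test_fun (cube r) (\<phi> n)"
    and lim: "(\<lambda>n. (LINT x:cube r|lebesgue. \<bar>\<phi> n x - u x\<bar> powr p)
             + (LINT x:cube r|lebesgue. norm (grad (\<phi> n) x - gu x) powr p)) \<longlonglongrightarrow> 0"
    by blast
  define X where "X n = (LINT x:cube r|lebesgue. \<bar>\<phi> n x - u x\<bar> powr p)" for n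
  define Y where "Y n = (LINT x:cube r|lebesgue. norm (grad (\<phi> n) x - gu x) powr p)" for n
  have X0: "0 \<le> X n" for n unfolding X_def by (rule set_int_nonneg) simp
  have Y0: "0 \<le> Y n" for n unfolding Y_def by (rule set_int_nonneg) simp
  have limXY: "(\<lambda>n. X n + Y n) \<longlonglongrightarrow> 0" using lim unfolding X_def Y_def .
  have limX: "X \<longlonglongrightarrow> 0"
    by (rule tendsto_sandwich[of "\<lambda>n. 0" _ _ "\<lambda>n. X n + Y n"]) (use X0 Y0 limXY in auto)
  have limY: "Y \<longlonglongrightarrow> 0"
    by (rule tendsto_sandwich[of "\<lambda>n. 0" _ _ "\<lambda>n. X n + Y n"]) (use X0 Y0 limXY in auto)
  define \<Phi> where "\<Phi> n = (\<lambda>x. s * \<phi> n (inverse s *\<^sub>R x))" for n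
  have tP: "test_fun (cube (s * r)) (\<Phi> n)" for n
    using test_scale[OF tp[of n], of s "inverse s"] s unfolding \<Phi>_def by simp
  have gP: "grad (\<Phi> n) x = grad (\<phi> n) (inverse s *\<^sub>R x)" for n x
    unfolding \<Phi>_def grad_scale[OF test_deriv[OF tp[of n]]] using s by simp
  have X': "(LINT x:cube (s * r)|lebesgue. \<bar>\<Phi> n x - ?U x\<bar> powr p) = s ^ DIM('a) * s powr p * X n" for n
  proof -
    have "\<bar>\<Phi> n (s *\<^sub>R y) - ?U (s *\<^sub>R y)\<bar> powr p = s powr p * \<bar>\<phi> n y - u y\<bar> powr p" for y
      unfolding \<Phi>_def sinv using s by (simp add: right_diff_distrib[symmetric] abs_mult powr_mult)
    then show ?thesis unfolding TR(2)[OF s] X_def by simp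
  qed
  have Y': "(LINT x:cube (s * r)|lebesgue. norm (grad (\<Phi> n) x - ?G x) powr p) = s ^ DIM('a) * Y n" for n
    unfolding TR(2)[OF s] Y_def gP sinv by simp
  have "(\<lambda>n. s ^ DIM('a) * s powr p * X n + s ^ DIM('a) * Y n) \<longlonglongrightarrow> s ^ DIM('a) * s powr p * 0 + s ^ DIM('a) * 0"
    by (intro tendsto_intros limX limY)
  then have L6: "(\<lambda>n. (LINT x:cube (s * r)|lebesgue. \<bar>\<Phi> n x - ?U x\<bar> powr p)
        + (LINT x:cube (s * r)|lebesgue. norm (grad (\<Phi> n) x - ?G x) powr p)) \<longlonglongrightarrow> 0"
    unfolding X' Y' by simp
  show ?thesis
    unfolding W01p_def W1p_def Lp_def
    using L1 L2 L3 L4 L5 L6 tP by blast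
qed



definition Sset :: "'a::euclidean_space set \<Rightarrow> real \<Rightarrow> real \<Rightarrow> real \<Rightarrow> real \<Rightarrow> real set" where
  "Sset \<Omega> p q \<alpha> \<beta> = {((1/p) * (LINT x:\<Omega>|lebesgue. norm (gu x) powr p)
        + (1/q) * (LINT x:\<Omega>|lebesgue. norm (gv x) powr q))
        / (LINT x:\<Omega>|lebesgue. \<bar>u x\<bar> powr \<alpha> * \<bar>v x\<bar> powr \<beta>) | u gu v gv.
      W01p \<Omega> p u gu \<and> W01p \<Omega> q v gv \<and>
      (LINT x:\<Omega>|lebesgue. \<bar>u x\<bar> powr \<alpha> * \<bar>v x\<bar> powr \<beta>) > 0}"

lemma lambda1_Sset: "lambda1 \<Omega> p q \<alpha> \<beta> = Inf (Sset \<Omega> p q \<alpha> \<beta>)"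
  by (simp add: lambda1_def Sset_def)

lemma Sset_nonneg: "z \<in> Sset \<Omega> p q \<alpha> \<beta> \<Longrightarrow> 0 < p \<Longrightarrow> 0 < q \<Longrightarrow> 0 \<le> z"
  unfolding Sset_def
  by (auto intro!: divide_nonneg_pos add_nonneg_nonneg mult_nonneg_nonneg set_int_nonneg)

lemma SI:
  fixes r s p q \<alpha> \<beta> :: real
  assumes s: "0 < s" and p: "0 < p" and q: "0 < q"
    and z: "z \<in> Sset (cube r :: 'a::euclidean_space set) p q \<alpha> \<beta>"
  shows "z / s powr (\<alpha> + \<beta>) \<in> Sset (cube (s * r) :: 'a set) p q \<alpha> \<beta>"
proof -
  from z obtain u gu v gv where Wu: "W01p (cube r :: 'a set) p u gu" and Wv: "W01p (cube r :: 'a set) q v gv"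
    and C: "(LINT x:cube r|lebesgue. \<bar>u x\<bar> powr \<alpha> * \<bar>v x\<bar> powr \<beta>) > 0"
    and zeq: "z = ((1/p) * (LINT x:cube r|lebesgue. norm (gu x) powr p)
        + (1/q) * (LINT x:cube r|lebesgue. norm (gv x) powr q))
        / (LINT x:cube r|lebesgue. \<bar>u x\<bar> powr \<alpha> * \<bar>v x\<bar> powr \<beta>)"
    unfolding Sset_def by blast
  define A where "A = (LINT x:cube r|lebesgue. norm (gu x) powr p)"
  define B where "B = (LINT x:cube r|lebesgue. norm (gv x) powr q)"
  define CC where "CC = (LINT x:cube r|lebesgue. \<bar>u x\<bar> powr \<alpha> * \<bar>v x\<bar> powr \<beta>)"
  let ?U = "\<lambda>x. s * u (inverse s *\<^sub>R x)"
  let ?GU = "\<lambda>x. gu (inverse s *\<^sub>R x)"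
  let ?V = "\<lambda>x. s * v (inverse s *\<^sub>R x)"
  let ?GV = "\<lambda>x. gv (inverse s *\<^sub>R x)"
  have sinv: "inverse s *\<^sub>R (s *\<^sub>R y) = y" for y :: 'a using s by simp
  have A': "(LINT x:cube (s * r)|lebesgue. norm (?GU x) powr p) = s ^ DIM('a) * A"
    unfolding TR(2)[OF s] sinv A_def ..
  have B': "(LINT x:cube (s * r)|lebesgue. norm (?GV x) powr q) = s ^ DIM('a) * B"
    unfolding TR(2)[OF s] sinv B_def ..
  have e: "\<bar>?U (s *\<^sub>R y)\<bar> powr \<alpha> * \<bar>?V (s *\<^sub>R y)\<bar> powr \<beta> = s powr (\<alpha> + \<beta>) * (\<bar>u y\<bar> powr \<alpha> * \<bar>v y\<bar> powr \<beta>)" for y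
    unfolding sinv using s by (simp add: abs_mult powr_mult powr_add)
  have C': "(LINT x:cube (s * r)|lebesgue. \<bar>?U x\<bar> powr \<alpha> * \<bar>?V x\<bar> powr \<beta>) = s ^ DIM('a) * (s powr (\<alpha> + \<beta>) * CC)"
    unfolding TR(2)[OF s] e CC_def by simp
  have pos: "0 < s ^ DIM('a)" "0 < s powr (\<alpha> + \<beta>)" "0 < CC" using s C by (auto simp: CC_def)
  have val: "z / s powr (\<alpha> + \<beta>) = ((1/p) * (s ^ DIM('a) * A) + (1/q) * (s ^ DIM('a) * B)) / (s ^ DIM('a) * (s powr (\<alpha> + \<beta>) * CC))"
    unfolding zeq A_def[symmetric] B_def[symmetric] CC_def[symmetric] using pos by (simp add: field_simps)
  show ?thesis
    unfolding Sset_def mem_Collect_eq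
    apply (rule exI[of _ ?U], rule exI[of _ ?GU], rule exI[of _ ?V], rule exI[of _ ?GV])
    unfolding A' B' C' val
    using WS[OF s p Wu] WS[OF s q Wv] pos by simp
qed

lemma Inf_div:
  fixes S :: "real set"
  assumes ne: "S \<noteq> {}" and bd: "\<And>z. z \<in> S \<Longrightarrow> 0 \<le> z" and c: "0 < c"
  shows "Inf ((\<lambda>z. z / c) ` S) = Inf S / c"
proof (rule antisym)
  have bS: "bdd_below S" using bd by (auto simp: bdd_below_def)
  have bS': "bdd_below ((\<lambda>z. z / c) ` S)" using bd c by (auto simp: bdd_below_def intro!: exI[of _ 0])
  have "Inf ((\<lambda>z. z / c) ` S) * c \<le> Inf S"
  proof (rule cInf_greatest[OF ne])
    fix z assume "z \<in> S"
    then have "Inf ((\<lambda>z. z / c) ` S) \<le> z / c" by (intro cInf_lower bS') auto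
    then show "Inf ((\<lambda>z. z / c) ` S) * c \<le> z" using c by (simp add: field_simps)
  qed
  then show "Inf ((\<lambda>z. z / c) ` S) \<le> Inf S / c" using c by (simp add: field_simps)
  show "Inf S / c \<le> Inf ((\<lambda>z. z / c) ` S)"
  proof (rule cInf_greatest)
    show "(\<lambda>z. z / c) ` S \<noteq> {}" using ne by simp
    fix y assume "y \<in> (\<lambda>z. z / c) ` S"
    then obtain z where "z \<in> S" "y = z / c" by blast
    then show "Inf S / c \<le> y" using cInf_lower[OF _ bS] c by (simp add: divide_right_mono)
  qed
qed

theorem lemma3p1:
  fixes p q \<alpha> \<beta> t :: real
  assumes "1 < p" and "1 < q" and "\<alpha> > 0" and "\<beta> > 0"
    and "\<alpha> / p + \<beta> / q = 1" and "t > 0"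
  shows "t powr (\<alpha> + \<beta>) * lambda1 (cube t :: 'a::euclidean_space set) p q \<alpha> \<beta>
           = lambda1 (cube 1 :: 'a set) p q \<alpha> \<beta>"
proof -
  note p = \<open>1 < p\<close> and q = \<open>1 < q\<close> and a = \<open>\<alpha> > 0\<close> and b = \<open>\<beta> > 0\<close> and t = \<open>t > 0\<close>
  define c where "c = t powr (\<alpha> + \<beta>)"
  have c: "0 < c" using t by (simp add: c_def)
  let ?S1 = "Sset (cube 1 :: 'a set) p q \<alpha> \<beta>"
  let ?St = "Sset (cube t :: 'a set) p q \<alpha> \<beta>"
  have inc1: "z / c \<in> ?St" if "z \<in> ?S1" for z
    using SI[OF t _ _ that] p q by (simp add: c_def)
  have inc2: "w * c \<in> ?S1" if "w \<in> ?St" for w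
  proof -
    have "w / inverse t powr (\<alpha> + \<beta>) \<in> Sset (cube (inverse t * t) :: 'a set) p q \<alpha> \<beta>"
      using SI[of "inverse t" p q w t] that p q t by simp
    then show ?thesis using t by (simp add: c_def inverse_powr divide_inverse)
  qed
  have eqS: "?St = (\<lambda>z. z / c) ` ?S1"
  proof
    show "?St \<subseteq> (\<lambda>z. z / c) ` ?S1"
    proof
      fix w assume "w \<in> ?St"
      then have "w * c \<in> ?S1" "w = (w * c) / c" using inc2 c by auto
      then show "w \<in> (\<lambda>z. z / c) ` ?S1" by blast
    qed
    show "(\<lambda>z. z / c) ` ?S1 \<subseteq> ?St" using inc1 by blast
  qed
  have ne: "?S1 \<noteq> {}"
  proof -
    have "((1/p) * (LINT x:cube 1|lebesgue. norm (grad (phi0::'a\<Rightarrow>real) x) powr p)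
        + (1/q) * (LINT x:cube 1|lebesgue. norm (grad (phi0::'a\<Rightarrow>real) x) powr q))
        / (LINT x:cube 1|lebesgue. \<bar>(phi0::'a\<Rightarrow>real) x\<bar> powr \<alpha> * \<bar>phi0 x\<bar> powr \<beta>) \<in> ?S1"
      unfolding Sset_def using W01p_phi0[OF p] W01p_phi0[OF q] denom_pos[OF a b] by blast
    then show ?thesis by blast
  qed
  have nn: "\<And>z. z \<in> ?S1 \<Longrightarrow> 0 \<le> z"
  proof -
    fix z assume "z \<in> ?S1"
    then show "0 \<le> z" by (rule Sset_nonneg) (use p q in auto)
  qed
  have "lambda1 (cube t :: 'a set) p q \<alpha> \<beta> = Inf ?St" by (rule lambda1_Sset)
  also have "\<dots> = Inf ((\<lambda>z. z / c) ` ?S1)" by (simp only: eqS)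
  also have "\<dots> = Inf ?S1 / c" by (rule Inf_div[OF ne nn c])
  finally have "lambda1 (cube t :: 'a set) p q \<alpha> \<beta> = lambda1 (cube 1 :: 'a set) p q \<alpha> \<beta> / c"
    by (simp add: lambda1_Sset)
  then show ?thesis using c unfolding c_def[symmetric] by simp
qed

end
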